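(* Let $A$ be an $m\times m$ coloring matrix, let $m'\ge1$, and let $A'$ be the $(m+m')\times(m+m')$ block matrix $$A'=\left[\begin{array}{c|c}A&0\\\hline \mathbf{1}&I\end{array}\right],$$ where $\mathbf{1}$ is the $m'\times m$ all-ones matrix, $I$ is the $m'\times m'$ identity matrix and the upper right block is zero. Then $$\frac{1}{m'}F_{A'}(x)^2+\left(\frac{m'-2}{m'}F_A(x)-1\right)F_{A'}(x)+\left(F_A(x)-\frac{m'-1}{m'}F_A(x)^2+m'x\right)=0,$$ and consequently $$F_{A'}(x)=\frac{m'-(m'-2)F_A(x)}{2}-\frac{\sqrt{(m'-(m'-2)F_A(x))^2-4(m'F_A(x)-(m'-1)F_A(x)^2+(m')^2x)}}{2}.$$
   Context: A plane tree is an unlabeled rooted tree in which the children of every vertex are linearly ordered. A coloring matrix is a square matrix $A=(a_{ij})$ with entries in $\{0,1\}$. An $A$-coloring of a plane tree assigns to each vertex a color (an index of a row of $A$) such that whenever a vertex of color $j$ is a child of a vertex of color $i$, $a_{ij}=1$. Let $t_A(n)$ be the number of pairs (plane tree with $n$ vertices, $A$-coloring of it), and $F_A(x)=\sum_{n\ge1}t_A(n)x^n$ (formal power series). *)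

theory Defs
  imports "HOL-Computational_Algebra.Formal_Power_Series"
begin

text \<open>A pair (plane tree, colouring) is represented as a vertex-coloured plane tree:
  each node carries its colour (a natural number) and an ordered list of children.\<close>
datatype ctree = CNode nat "ctree list"

fun root_color :: "ctree \<Rightarrow> nat" where
  "root_color (CNode c ts) = c"

fun nverts :: "ctree \<Rightarrow> nat" where
  "nverts (CNode c ts) = Suc (sum_list (map nverts ts))"

fun valid_col :: "nat \<Rightarrow> (nat \<Rightarrow> nat \<Rightarrow> bool) \<Rightarrow> ctree \<Rightarrow> bool" where
  "valid_col m A (CNode c ts) =
     (c < m \<and> (\<forall>t\<in>set ts. A c (root_color t) \<and> valid_col m A t))"

definition tA :: "nat \<Rightarrow> (nat \<Rightarrow> nat \<Rightarrow> bool) \<Rightarrow> nat \<Rightarrow> nat" where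
  "tA m A n = card {T. nverts T = n \<and> valid_col m A T}"

definition FA :: "nat \<Rightarrow> (nat \<Rightarrow> nat \<Rightarrow> bool) \<Rightarrow> real fps" where
  "FA m A = Abs_fps (\<lambda>n. if n = 0 then 0 else of_nat (tA m A n))"

text \<open>The (m+m') x (m+m') block matrix [A 0; 1 I].\<close>
definition ext_matrix :: "nat \<Rightarrow> (nat \<Rightarrow> nat \<Rightarrow> bool) \<Rightarrow> nat \<Rightarrow> nat \<Rightarrow> bool" where
  "ext_matrix m A i j =
     (if i < m then (j < m \<and> A i j) else (if j < m then True else i = j))"

end

theory Submission
  imports Defs
begin

definition cnt :: "(ctree \<Rightarrow> bool) \<Rightarrow> nat \<Rightarrow> nat" where
  "cnt P n = card {T. P T \<and> nverts T = n}"
definition fcnt :: "(ctree \<Rightarrow> bool) \<Rightarrow> nat \<Rightarrow> nat" where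
  "fcnt P n = card {ts. list_all P ts \<and> sum_list (map nverts ts) = n}"

lemma nverts_pos: "nverts T \<ge> 1"
  by (cases T) auto

lemma length_le_sum: "length ts \<le> sum_list (map nverts ts)"
proof (induction ts)
  case (Cons t ts) then show ?case using nverts_pos[of t] by simp
qed simp

lemma fin_le: "finite {T. valid_col M (\<lambda>_ _. True) T \<and> nverts T \<le> n}"
proof (induction n)
  case 0
  have "{T. valid_col M (\<lambda>_ _. True) T \<and> nverts T \<le> 0} = {}" using nverts_pos
    by (metis (no_types, lifting) Collect_empty_eq le_zero_eq not_one_le_zero)
  then show ?case by (metis finite.emptyI)
next
  case (Suc n)
  let ?S = "{T. valid_col M (\<lambda>_ _. True) T \<and> nverts T \<le> n}"
  have "{T. valid_col M (\<lambda>_ _. True) T \<and> nverts T \<le> Suc n} \<subseteq>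
     (\<lambda>(c,ts). CNode c ts) ` ({..<M} \<times> {ts. set ts \<subseteq> ?S \<and> length ts \<le> n})"
  proof
    fix T assume "T \<in> {T. valid_col M (\<lambda>_ _. True) T \<and> nverts T \<le> Suc n}"
    then obtain c ts where T: "T = CNode c ts" and v: "valid_col M (\<lambda>_ _. True) (CNode c ts)"
      and sz: "nverts (CNode c ts) \<le> Suc n" by (cases T) auto
    have "length ts \<le> n" using sz length_le_sum[of ts] by simp
    moreover have "set ts \<subseteq> ?S"
    proof
      fix t assume "t \<in> set ts"
      then have "nverts t \<le> sum_list (map nverts ts)" by (simp add: member_le_sum_list)
      then show "t \<in> ?S" using sz v \<open>t \<in> set ts\<close> by auto
    qed
    ultimately show "T \<in> (\<lambda>(c,ts). CNode c ts) ` ({..<M} \<times> {ts. set ts \<subseteq> ?S \<and> length ts \<le> n})"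
      using T v by force
  qed
  moreover have "finite ((\<lambda>(c,ts). CNode c ts) ` ({..<M} \<times> {ts. set ts \<subseteq> ?S \<and> length ts \<le> n}))"
    using Suc.IH by (intro finite_imageI finite_cartesian_product finite_lists_length_le) auto
  ultimately show ?case by (rule finite_subset)
qed

lemma valid_mono: "valid_col M A T \<Longrightarrow> valid_col M (\<lambda>_ _. True) T"
  by (induction T) auto

lemma fin_trees:
  assumes "\<And>T. P T \<Longrightarrow> valid_col M A T"
  shows "finite {T. P T \<and> nverts T = n}"
  by (rule finite_subset[OF _ fin_le[of M n]]) (auto dest: assms valid_mono)

lemma fin_forests:
  assumes "\<And>k. finite {T. P T \<and> nverts T = k}"
  shows "finite {ts. list_all P ts \<and> sum_list (map nverts ts) = n}"
proof -
  let ?S = "\<Union>k\<in>{..n}. {T. P T \<and> nverts T = k}"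
  have "{ts. list_all P ts \<and> sum_list (map nverts ts) = n} \<subseteq> {ts. set ts \<subseteq> ?S \<and> length ts \<le> n}"
  proof
    fix ts assume a: "ts \<in> {ts. list_all P ts \<and> sum_list (map nverts ts) = n}"
    have "set ts \<subseteq> ?S"
    proof
      fix t assume "t \<in> set ts"
      then have "nverts t \<le> sum_list (map nverts ts)" by (simp add: member_le_sum_list)
      then show "t \<in> ?S" using a \<open>t \<in> set ts\<close> by (auto simp: list_all_iff)
    qed
    then show "ts \<in> {ts. set ts \<subseteq> ?S \<and> length ts \<le> n}" using a length_le_sum[of ts] by auto
  qed
  moreover have "finite {ts. set ts \<subseteq> ?S \<and> length ts \<le> n}"
    using assms by (intro finite_lists_length_le) auto
  ultimately show ?thesis by (rule finite_subset)
qed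

lemma forest_rec:
  assumes fin: "\<And>k. finite {T. P T \<and> nverts T = k}"
  shows "fcnt P n = (if n = 0 then 1 else 0) + (\<Sum>k=0..n. cnt P k * fcnt P (n-k))"
proof -
  define Sf where "Sf k = {ts. list_all P ts \<and> sum_list (map nverts ts) = k}" for k
  define St where "St k = {T. P T \<and> nverts T = k}" for k
  define C where "C = (\<lambda>(t::ctree,ts). t#ts)"
  have finf: "finite (Sf k)" for k unfolding Sf_def by (rule fin_forests[OF fin])
  have fint: "finite (St k)" for k unfolding St_def by (rule fin)
  have eq: "Sf n = (if n=0 then {[]} else {}) \<union> (\<Union>k\<in>{0..n}. C ` (St k \<times> Sf (n-k)))"
  proof (intro equalityI subsetI)
    fix ts assume a: "ts \<in> Sf n"
    show "ts \<in> (if n=0 then {[]} else {}) \<union> (\<Union>k\<in>{0..n}. C ` (St k \<times> Sf (n-k)))"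
    proof (cases ts)
      case Nil then show ?thesis using a by (simp add: Sf_def)
    next
      case (Cons t ts')
      then have "t \<in> St (nverts t)" "ts' \<in> Sf (n - nverts t)" "nverts t \<in> {0..n}"
        using a by (auto simp: Sf_def St_def)
      then show ?thesis using Cons by (auto simp: C_def)
    qed
  next
    fix ts assume "ts \<in> (if n=0 then {[]} else {}) \<union> (\<Union>k\<in>{0..n}. C ` (St k \<times> Sf (n-k)))"
    then show "ts \<in> Sf n" by (auto simp: Sf_def St_def C_def split: if_splits)
  qed
  have e0: "fcnt P n = card (Sf n)" by (simp add: fcnt_def Sf_def)
  have e1: "card (Sf n) = card (if n=0 then {[]} else {}::ctree list set) + card (\<Union>k\<in>{0..n}. C ` (St k \<times> Sf (n-k)))"
    unfolding eq
  proof (rule card_Un_disjoint)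
    show "finite (\<Union>k\<in>{0..n}. C ` (St k \<times> Sf (n-k)))" using finf fint by blast
    show "(if n=0 then {[]} else {}) \<inter> (\<Union>k\<in>{0..n}. C ` (St k \<times> Sf (n-k))) = {}"
      by (auto simp: C_def)
  qed simp
  have e2: "card (\<Union>k\<in>{0..n}. C ` (St k \<times> Sf (n-k))) = (\<Sum>k=0..n. card (C ` (St k \<times> Sf (n-k))))"
    proof (rule card_UN_disjoint)
    show "\<forall>i\<in>{0..n}. \<forall>j\<in>{0..n}. i \<noteq> j \<longrightarrow> C ` (St i \<times> Sf (n-i)) \<inter> C ` (St j \<times> Sf (n-j)) = {}"
      by (auto simp: C_def St_def)
  qed (use finf fint in auto)
  have e3: "(\<Sum>k=0..n. card (C ` (St k \<times> Sf (n-k)))) = (\<Sum>k=0..n. cnt P k * fcnt P (n-k))"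
  proof (rule sum.cong[OF refl])
    fix k
    have "inj_on C (St k \<times> Sf (n-k))" by (auto simp: C_def inj_on_def)
    then have "card (C ` (St k \<times> Sf (n-k))) = card (St k) * card (Sf (n-k))"
      by (metis card_image card_cartesian_product)
    then show "card (C ` (St k \<times> Sf (n-k))) = cnt P k * fcnt P (n-k)"
      by (simp add: St_def Sf_def cnt_def fcnt_def)
  qed
  have e4: "card (if n=0 then {[]} else {}::ctree list set) = (if n = 0 then 1 else 0)" by simp
  show ?thesis unfolding e0 e1 e2 e3 e4 ..
qed

lemma root_cnt:
  assumes R: "\<And>d ts. R (CNode d ts) \<longleftrightarrow> d = c \<and> list_all Q ts"
  shows "cnt R (Suc n) = fcnt Q n" "cnt R 0 = 0"
proof -
  have eqS: "{T. R T \<and> nverts T = Suc n} = CNode c ` {ts. list_all Q ts \<and> sum_list (map nverts ts) = n}"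
  proof (intro equalityI subsetI)
    fix T assume "T \<in> {T. R T \<and> nverts T = Suc n}"
    then obtain d ts where T: "T = CNode d ts" "R (CNode d ts)" "nverts (CNode d ts) = Suc n"
      by (cases T) auto
    then have "d = c" "list_all Q ts" using R by blast+
    then show "T \<in> CNode c ` {ts. list_all Q ts \<and> sum_list (map nverts ts) = n}"
      using T by auto
  next
    fix T assume "T \<in> CNode c ` {ts. list_all Q ts \<and> sum_list (map nverts ts) = n}"
    then obtain ts where "T = CNode c ts" "list_all Q ts" "sum_list (map nverts ts) = n" by blast
    then show "T \<in> {T. R T \<and> nverts T = Suc n}" using R by simp
  qed
  have "card (CNode c ` {ts. list_all Q ts \<and> sum_list (map nverts ts) = n}) =
     card {ts. list_all Q ts \<and> sum_list (map nverts ts) = n}"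
    by (rule card_image) (auto simp: inj_on_def)
  then show "cnt R (Suc n) = fcnt Q n"
    unfolding cnt_def fcnt_def eqS .
  have "nverts T \<noteq> 0" for T using nverts_pos[of T] by simp
  then have e: "{T. R T \<and> nverts T = 0} = {}" by blast
  show "cnt R 0 = 0" unfolding cnt_def e by (rule card.empty)
qed

lemma cnt_0: "cnt P 0 = 0"
proof -
  have "nverts T \<noteq> 0" for T using nverts_pos[of T] by simp
  then have e: "{T. P T \<and> nverts T = 0} = {}" by blast
  show "cnt P 0 = 0" unfolding cnt_def e by (rule card.empty)
qed

lemma valid_old:
  "(valid_col (m+m') (ext_matrix m A) T \<and> root_color T < m) \<longleftrightarrow> valid_col m A T"
proof (induction T)
  case (CNode c ts)
  show ?case
  proof
    assume a: "valid_col (m+m') (ext_matrix m A) (CNode c ts) \<and> root_color (CNode c ts) < m"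
    then have "c < m" by simp
    moreover have "A c (root_color t) \<and> valid_col m A t" if t: "t \<in> set ts" for t
    proof -
      have "ext_matrix m A c (root_color t) \<and> valid_col (m+m') (ext_matrix m A) t" using a t by auto
      then have "root_color t < m \<and> A c (root_color t) \<and> valid_col (m+m') (ext_matrix m A) t"
        using \<open>c < m\<close> by (simp add: ext_matrix_def)
      then show ?thesis using CNode.IH[OF t] by blast
    qed
    ultimately show "valid_col m A (CNode c ts)" by simp
  next
    assume a: "valid_col m A (CNode c ts)"
    then have "c < m" by simp
    have "t \<in> set ts \<Longrightarrow> valid_col m A t" for t using a by simp
    then have "t \<in> set ts \<Longrightarrow> valid_col (m+m') (ext_matrix m A) t \<and> root_color t < m" for t
      using CNode.IH by blast
    then show "valid_col (m+m') (ext_matrix m A) (CNode c ts) \<and> root_color (CNode c ts) < m"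
      using a \<open>c < m\<close> by (auto simp: ext_matrix_def)
  qed
qed

lemma root_lt: "valid_col m A T \<Longrightarrow> root_color T < m"
  by (cases T) auto

definition GT :: "nat \<Rightarrow> nat \<Rightarrow> (nat \<Rightarrow> nat \<Rightarrow> bool) \<Rightarrow> nat \<Rightarrow> ctree \<Rightarrow> bool" where
  "GT m m' A i T = (valid_col (m+m') (ext_matrix m A) T \<and> root_color T = i)"

lemma GT_char:
  assumes "m \<le> i" "i < m+m'"
  shows "GT m m' A i (CNode d ts) \<longleftrightarrow> d = i \<and> list_all (\<lambda>t. valid_col m A t \<or> GT m m' A i t) ts"
proof -
  have "ext_matrix m A i j \<longleftrightarrow> j < m \<or> j = i" for j using assms by (auto simp: ext_matrix_def)
  then have "(ext_matrix m A i (root_color t) \<and> valid_col (m+m') (ext_matrix m A) t) \<longleftrightarrow>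
     (valid_col m A t \<or> GT m m' A i t)" for t
    using valid_old[of m m' A t] by (auto simp: GT_def)
  then show ?thesis using assms by (auto simp: GT_def list_all_iff)
qed

lemma GT_valid: "GT m m' A i T \<Longrightarrow> valid_col (m+m') (ext_matrix m A) T"
  by (simp add: GT_def)

lemma old_valid: "valid_col m A T \<Longrightarrow> valid_col (m+m') (ext_matrix m A) T"
  using valid_old by blast

lemma cnt_Q:
  assumes "m \<le> i"
  shows "cnt (\<lambda>t. valid_col m A t \<or> GT m m' A i t) n = cnt (valid_col m A) n + cnt (GT m m' A i) n"
proof -
  have e: "{T. (valid_col m A T \<or> GT m m' A i T) \<and> nverts T = n} =
    {T. valid_col m A T \<and> nverts T = n} \<union> {T. GT m m' A i T \<and> nverts T = n}" by blast
  have f1: "finite {T. valid_col m A T \<and> nverts T = n}" by (rule fin_trees) 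
  have f2: "finite {T. GT m m' A i T \<and> nverts T = n}" by (rule fin_trees[OF GT_valid])
  have d: "{T. valid_col m A T \<and> nverts T = n} \<inter> {T. GT m m' A i T \<and> nverts T = n} = {}"
    using assms by (fastforce simp: GT_def dest: root_lt)
  show ?thesis unfolding cnt_def e using card_Un_disjoint[OF f1 f2 d] .
qed

lemma cnt_all:
  "cnt (valid_col (m+m') (ext_matrix m A)) n = cnt (valid_col m A) n + (\<Sum>k<m'. cnt (GT m m' A (m+k)) n)"
proof -
  have e: "{T. valid_col (m+m') (ext_matrix m A) T \<and> nverts T = n} =
    {T. valid_col m A T \<and> nverts T = n} \<union> (\<Union>k\<in>{..<m'}. {T. GT m m' A (m+k) T \<and> nverts T = n})"
  proof (intro equalityI subsetI)
    fix T assume a: "T \<in> {T. valid_col (m+m') (ext_matrix m A) T \<and> nverts T = n}"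
    show "T \<in> {T. valid_col m A T \<and> nverts T = n} \<union> (\<Union>k\<in>{..<m'}. {T. GT m m' A (m+k) T \<and> nverts T = n})"
    proof (cases "root_color T < m")
      case True then show ?thesis using a valid_old[of m m' A T] by auto
    next
      case False
      have "root_color T < m + m'" using a by (cases T) auto
      then have "root_color T - m \<in> {..<m'}" "root_color T = m + (root_color T - m)" using False by auto
      then show ?thesis using a by (auto simp: GT_def)
    qed
  qed (auto simp: GT_def old_valid)
  have f1: "finite {T. valid_col m A T \<and> nverts T = n}" by (rule fin_trees) 
  have f2: "finite {T. GT m m' A i T \<and> nverts T = n}" for i by (rule fin_trees[OF GT_valid])
  have d: "{T. valid_col m A T \<and> nverts T = n} \<inter> (\<Union>k\<in>{..<m'}. {T. GT m m' A (m+k) T \<and> nverts T = n}) = {}"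
    by (fastforce simp: GT_def dest: root_lt)
  have "card (\<Union>k\<in>{..<m'}. {T. GT m m' A (m+k) T \<and> nverts T = n}) = (\<Sum>k<m'. cnt (GT m m' A (m+k)) n)"
    unfolding cnt_def by (rule card_UN_disjoint) (use f2 in \<open>auto simp: GT_def\<close>)
  moreover have "card (\<Union>k\<in>{..<m'}. {T. GT m m' A (m+k) T \<and> nverts T = n}) + cnt (valid_col m A) n
     = cnt (valid_col (m+m') (ext_matrix m A)) n"
    unfolding cnt_def e using card_Un_disjoint[OF f1 _ d] f2 by auto
  ultimately show ?thesis by linarith
qed

definition gf :: "(ctree \<Rightarrow> bool) \<Rightarrow> real fps" where
  "gf P = Abs_fps (\<lambda>n. of_nat (cnt P n))"
definition ff :: "(ctree \<Rightarrow> bool) \<Rightarrow> real fps" where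
  "ff P = Abs_fps (\<lambda>n. of_nat (fcnt P n))"

lemma gf_0: "fps_nth (gf P) 0 = 0"
  by (simp add: gf_def cnt_0)

lemma ff_eq:
  assumes fin: "\<And>k. finite {T. P T \<and> nverts T = k}"
  shows "ff P = 1 + gf P * ff P"
proof (rule fps_ext)
  fix n
  have "real (fcnt P n) = (if n=0 then 1 else 0) + (\<Sum>k=0..n. real (cnt P k) * real (fcnt P (n-k)))"
    by (subst forest_rec[OF fin]) (simp add: of_nat_sum)
  then show "fps_nth (ff P) n = fps_nth (1 + gf P * ff P) n"
    by (simp add: fps_mult_nth ff_def gf_def)
qed

lemma gf_root:
  assumes R: "\<And>d ts. R (CNode d ts) \<longleftrightarrow> d = c \<and> list_all Q ts"
  shows "gf R = fps_X * ff Q"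
proof (rule fps_ext)
  fix n show "fps_nth (gf R) n = fps_nth (fps_X * ff Q) n"
  proof (cases n)
    case 0 then show ?thesis by (simp add: gf_0)
  next
    case (Suc k) then show ?thesis using root_cnt(1)[OF R] by (simp add: gf_def ff_def)
  qed
qed

lemma FA_gf: "FA m A = gf (valid_col m A)"
proof (rule fps_ext)
  fix n
  have "tA m A n = cnt (valid_col m A) n"
    unfolding tA_def cnt_def by (metis (no_types, lifting) Collect_cong)
  then show "fps_nth (FA m A) n = fps_nth (gf (valid_col m A)) n"
    by (simp add: FA_def gf_def cnt_0)
qed

lemma G_eq:
  assumes "m \<le> i" "i < m+m'"
  shows "gf (GT m m' A i) = fps_X + (FA m A + gf (GT m m' A i)) * gf (GT m m' A i)"
proof -
  define Q where "Q = (\<lambda>t. valid_col m A t \<or> GT m m' A i t)"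
  have finQ: "finite {T. Q T \<and> nverts T = k}" for k
    by (rule fin_trees[where M="m+m'" and A="ext_matrix m A"]) (auto simp: Q_def GT_valid old_valid)
  have gQ: "gf Q = FA m A + gf (GT m m' A i)"
    by (rule fps_ext) (simp add: Q_def gf_def FA_gf cnt_Q[OF assms(1)])
  have fQ: "ff Q = 1 + gf Q * ff Q" by (rule ff_eq[OF finQ])
  have G: "gf (GT m m' A i) = fps_X * ff Q"
    by (rule gf_root[where c=i]) (simp add: GT_char[OF assms] Q_def)
  have "fps_X * ff Q = fps_X * (1 + gf Q * ff Q)" using fQ by simp
  also have "\<dots> = fps_X + gf Q * (fps_X * ff Q)" by (simp add: algebra_simps)
  finally have "fps_X * ff Q = fps_X + gf Q * (fps_X * ff Q)" .
  moreover have gQ': "FA m A + fps_X * ff Q = gf Q" using gQ G by simp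
  ultimately show ?thesis unfolding G gQ' by blast
qed

lemma uniq:
  fixes F G H :: "real fps"
  assumes g: "G = fps_X + (F+G)*G" and h: "H = fps_X + (F+H)*H"
    and "fps_nth F 0 = 0" "fps_nth G 0 = 0" "fps_nth H 0 = 0"
  shows "G = H"
proof -
  have "(G - H) * (1 - F - G - H) = 0" using g h by algebra
  moreover have "1 - F - G - H \<noteq> 0"
  proof
    assume "1 - F - G - H = 0"
    then have "fps_nth (1 - F - G - H) 0 = 0" by simp
    then show False using assms by simp
  qed
  ultimately show ?thesis by simp
qed

lemma Fprime:
  assumes "m' \<ge> 1"
  shows "FA (m+m') (ext_matrix m A) = FA m A + of_nat m' * gf (GT m m' A m)"
proof -
  have F0: "fps_nth (FA m A) 0 = 0" by (simp add: FA_def)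
  have eqk: "gf (GT m m' A (m+k)) = gf (GT m m' A m)" if "k < m'" for k
    by (rule uniq[OF G_eq G_eq]) (use that assms in \<open>auto simp: F0 gf_0\<close>)
  have "FA (m+m') (ext_matrix m A) = FA m A + (\<Sum>k<m'. gf (GT m m' A (m+k)))"
    by (rule fps_ext) (simp add: FA_gf gf_def fps_sum_nth cnt_all of_nat_sum)
  also have "(\<Sum>k<m'. gf (GT m m' A (m+k))) = (\<Sum>k<m'. gf (GT m m' A m))"
    by (rule sum.cong) (auto simp: eqk)
  finally show ?thesis by simp
qed


theorem theorem27:
  fixes m m' :: nat and A :: "nat \<Rightarrow> nat \<Rightarrow> bool"
  assumes "m' \<ge> 1"
  defines "F \<equiv> FA m A" and "F' \<equiv> FA (m + m') (ext_matrix m A)"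
  shows "fps_const (1 / real m') * F'^2
           + (fps_const ((real m' - 2) / real m') * F - 1) * F'
           + (F - fps_const ((real m' - 1) / real m') * F^2 + fps_const (real m') * fps_X) = 0
       \<and> F' = fps_const (1/2) * (fps_const (real m') - fps_const (real m' - 2) * F)
           - fps_const (1/2) * fps_radical (\<lambda>k a. sqrt a) 2
               ((fps_const (real m') - fps_const (real m' - 2) * F)^2
                - 4 * (fps_const (real m') * F - fps_const (real m' - 1) * F^2
                       + fps_const ((real m')^2) * fps_X))"
proof -
  define G where "G = gf (GT m m' A m)"
  define c where "c = fps_const (real m')"
  define u where "u = fps_const (1 / real m')"
  have m0: "real m' \<noteq> 0" using assms(1) by simp
  have Geq: "G = fps_X + (F + G) * G" unfolding G_def F_def by (rule G_eq) (use assms(1) in auto)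
  have Fp: "F' = F + c * G" unfolding F'_def F_def G_def c_def
    using Fprime[OF assms(1)] by (simp add: fps_of_nat)
  have F0: "fps_nth F 0 = 0" by (simp add: F_def FA_def)
  have G0: "fps_nth G 0 = 0" by (simp add: G_def gf_0)
  have c2: "fps_const (real m' - 2) = c - 2" unfolding c_def by (simp add: fps_numeral_fps_const)
  have c1: "fps_const (real m' - 1) = c - 1" unfolding c_def by (metis fps_const_sub fps_const_1_eq_1)
  have csq: "fps_const ((real m')^2) = c^2" by (simp add: c_def power2_eq_square)
  define E where "E = fps_const (real m') * F - fps_const (real m' - 1) * F^2 + fps_const ((real m')^2) * fps_X"
  define P where "P = fps_const (real m') - fps_const (real m' - 2) * F"
  have key: "F'^2 - P * F' + E = 0"
  proof -
    have "F'^2 - P * F' + E = c^2 * (fps_X + (F + G) * G - G)"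
      unfolding E_def P_def c2 c1 csq Fp c_def[symmetric] by algebra
    also have "\<dots> = 0" using Geq by simp
    finally show ?thesis .
  qed
  have h1: "fps_const ((real m' - 2) / real m') = u * (c - 2)"
    unfolding c2[symmetric] by (simp add: u_def)
  have h2: "fps_const ((real m' - 1) / real m') = u * (c - 1)"
    unfolding c1[symmetric] by (simp add: u_def)
  have h4: "u * c = 1" using m0 by (simp add: u_def c_def)
  have part1: "fps_const (1 / real m') * F'^2
           + (fps_const ((real m' - 2) / real m') * F - 1) * F'
           + (F - fps_const ((real m' - 1) / real m') * F^2 + fps_const (real m') * fps_X) = 0"
  proof -
    have "fps_const (1 / real m') * F'^2
           + (fps_const ((real m' - 2) / real m') * F - 1) * F'
           + (F - fps_const ((real m' - 1) / real m') * F^2 + fps_const (real m') * fps_X)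
          = u * (F'^2 - P * F' + E)"
      unfolding h1 h2 u_def[symmetric] c_def[symmetric] E_def P_def c2 c1 csq using h4 by algebra
    then show ?thesis using key by simp
  qed
  define D where "D = P^2 - 4 * E"
  define a where "a = P - 2 * F'"
  have aD: "a^2 = D" unfolding a_def D_def using key by algebra
  have Fp0: "fps_nth F' 0 = 0" using F0 G0 Fp by simp
  have a0: "fps_nth a 0 = real m'" using F0 Fp0 by (simp add: a_def P_def)
  have D0: "fps_nth D 0 = (real m')^2" using aD[symmetric] a0 by (simp add: power2_eq_square)
  have "a ^ Suc 1 = D \<longleftrightarrow> a = fps_radical (\<lambda>k a. sqrt a) (Suc 1) D"
    by (rule radical_unique) (use D0 m0 a0 in \<open>auto simp: power2_eq_square\<close>)
  then have ar: "a = fps_radical (\<lambda>k a. sqrt a) 2 D" using aD by (simp add: numeral_2_eq_2)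
  have half: "fps_const (1/2 :: real) * 2 = 1"
    by (simp add: fps_numeral_fps_const)
  have "F' = fps_const (1/2) * P - fps_const (1/2) * a"
    unfolding a_def using half by algebra
  then have part2: "F' = fps_const (1/2) * P - fps_const (1/2) * fps_radical (\<lambda>k a. sqrt a) 2 D"
    using ar by simp
  show ?thesis using part1 part2 unfolding D_def E_def P_def by blast
qed

end
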